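(* Let $4\le r\le 7$, let $M$ be a monomial ideal in $k[E_r]$, let $m\in\mathbb{N}$, and for $a=(a_1,\dots,a_r)$ put $D_a=m\ell+a_1e_1+\dots+a_re_r\in\mathrm{Pic}(X_r)$. Suppose that, for all $a$ with all $a_i$ sufficiently large, the dimension $\dim_k\bigl(k[E_r]/M\bigr)_{D_a}$ or the dimension $\dim_k\bigl(k[E_r]/(M:(e_1\cdots e_r)^\infty)\bigr)_{D_a}$ does not depend on $a$. Then, for all $a_i$ sufficiently large, $\dim_k\bigl(k[E_r]/M\bigr)_{D_a}=\dim_k\bigl(k[E_r]/(M:(e_1\cdots e_r)^\infty)\bigr)_{D_a}$.
   Context: $\mathrm{Pic}(X_r)\cong\mathbb{Z}^{r+1}$ has basis $\ell,e_1,\dots,e_r$ with $\ell^2=1$, $\ell\cdot e_j=0$, $e_i\cdot e_j=-\delta_{ij}$, $K=-3\ell+\sum e_i$ (here $X_r$ is the blow up of $\mathbb{P}^2$ at $r$ points in general position). $E_r$ is the finite set of classes $E\in\mathrm{Pic}(X_r)$ with $K\cdot E=E^2=-1$. $k[E_r]$ is the polynomial ring with one variable for each $E\in E_r$, graded by $\mathrm{Pic}(X_r)$ via $\deg=E$; the variables of the classes $e_1,\dots,e_r$ are also denoted $e_1,\dots,e_r$. $(M:f^\infty)=\bigcup_k(M:f^k)$ denotes saturation. *)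

theory Defs
  imports Complex_Main "HOL-Library.Poly_Mapping"
begin

text \<open>Pic(X_r) = Z^(r+1) is represented by functions nat => int supported on {0..r};
  coordinate 0 is the coefficient of l, coordinate i (1 <= i <= r) that of e_i.\<close>

type_synonym pic = "nat \<Rightarrow> int"

definition in_pic :: "nat \<Rightarrow> pic \<Rightarrow> bool" where
  "in_pic r x \<longleftrightarrow> (\<forall>j. j > r \<longrightarrow> x j = 0)"

definition inter :: "nat \<Rightarrow> pic \<Rightarrow> pic \<Rightarrow> int" where
  "inter r x y = x 0 * y 0 - (\<Sum>i=1..r. x i * y i)"

definition canon :: "nat \<Rightarrow> pic" where
  "canon r = (\<lambda>j. if j = 0 then -3 else if j \<le> r then 1 else 0)"

definition ecls :: "nat \<Rightarrow> pic" where
  "ecls i = (\<lambda>j. if j = i then 1 else 0)"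

definition Exc :: "nat \<Rightarrow> pic set" where
  "Exc r = {E. in_pic r E \<and> inter r (canon r) E = -1 \<and> inter r E E = -1}"

text \<open>Polynomials in variables indexed by classes; k[E_r] is the subring of polynomials
  whose monomials only involve the variables indexed by E_r.\<close>

type_synonym 'k cpoly = "(pic \<Rightarrow>\<^sub>0 nat) \<Rightarrow>\<^sub>0 'k"

definition kE :: "nat \<Rightarrow> ('k::field) cpoly set" where
  "kE r = {p. \<forall>\<alpha>\<in>Poly_Mapping.keys p. Poly_Mapping.keys \<alpha> \<subseteq> Exc r}"

definition mdeg :: "(pic \<Rightarrow>\<^sub>0 nat) \<Rightarrow> pic" where
  "mdeg \<alpha> = (\<lambda>j. \<Sum>E\<in>Poly_Mapping.keys \<alpha>. int (Poly_Mapping.lookup \<alpha> E) * E j)"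

definition hcomp :: "nat \<Rightarrow> pic \<Rightarrow> ('k::field) cpoly set" where
  "hcomp r D = {p \<in> kE r. \<forall>\<alpha>\<in>Poly_Mapping.keys p. mdeg \<alpha> = D}"

definition monom1 :: "(pic \<Rightarrow>\<^sub>0 nat) \<Rightarrow> ('k::field) cpoly" where
  "monom1 \<alpha> = Poly_Mapping.single \<alpha> 1"

definition is_ideal :: "nat \<Rightarrow> ('k::field) cpoly set \<Rightarrow> bool" where
  "is_ideal r I \<longleftrightarrow> I \<subseteq> kE r \<and> 0 \<in> I \<and> (\<forall>p\<in>I. \<forall>q\<in>I. p + q \<in> I)
     \<and> (\<forall>p\<in>kE r. \<forall>q\<in>I. p * q \<in> I)"

definition ideal_gen :: "nat \<Rightarrow> ('k::field) cpoly set \<Rightarrow> 'k cpoly set" where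
  "ideal_gen r S = \<Inter>{I. is_ideal r I \<and> S \<subseteq> I}"

definition monomial_ideal :: "nat \<Rightarrow> ('k::field) cpoly set \<Rightarrow> bool" where
  "monomial_ideal r M \<longleftrightarrow> is_ideal r M \<and>
     (\<exists>A. (\<forall>\<alpha>\<in>A. Poly_Mapping.keys \<alpha> \<subseteq> Exc r) \<and> M = ideal_gen r (monom1 ` A))"

definition saturation :: "nat \<Rightarrow> ('k::field) cpoly set \<Rightarrow> 'k cpoly \<Rightarrow> 'k cpoly set" where
  "saturation r M f = {p \<in> kE r. \<exists>n. f ^ n * p \<in> M}"

definition eprod :: "nat \<Rightarrow> (pic \<Rightarrow>\<^sub>0 nat)" where
  "eprod r = (\<Sum>i=1..r. Poly_Mapping.single (ecls i) 1)"

definition pscale :: "'k::field \<Rightarrow> 'k cpoly \<Rightarrow> 'k cpoly" where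
  "pscale c p = Poly_Mapping.map (\<lambda>x. c * x) p"

definition kdim :: "('k::field) cpoly set \<Rightarrow> nat" where
  "kdim S = vector_space.dim pscale S"

text \<open>dim_k (k[E_r]/I)_D = dim_k k[E_r]_D - dim_k I_D (all graded pieces are finite dimensional).\<close>
definition qdim :: "nat \<Rightarrow> ('k::field) cpoly set \<Rightarrow> pic \<Rightarrow> nat" where
  "qdim r I D = kdim (hcomp r D :: 'k cpoly set) - kdim (I \<inter> hcomp r D)"

definition Dcls :: "nat \<Rightarrow> nat \<Rightarrow> (nat \<Rightarrow> int) \<Rightarrow> pic" where
  "Dcls r m a = (\<lambda>j. if j = 0 then int m else if j \<le> r then a j else 0)"

end

theory Submission
  imports Defs
begin

lemma ecls_inj: "ecls i = ecls j \<Longrightarrow> i = j"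
  by (metis ecls_def zero_neq_one)

lemma exc_sums:
  assumes "E \<in> Exc r"
  shows "(\<Sum>i=1..r. E i) = 1 - 3 * E 0" "(\<Sum>i=1..r. (E i)^2) = (E 0)^2 + 1"
proof -
  have "(\<Sum>i=1..r. canon r i * E i) = (\<Sum>i=1..r. E i)"
    by (rule sum.cong) (auto simp: canon_def)
  moreover have "canon r 0 = -3" by (simp add: canon_def)
  ultimately show "(\<Sum>i=1..r. E i) = 1 - 3 * E 0"
    using assms by (simp add: Exc_def inter_def)
  show "(\<Sum>i=1..r. (E i)^2) = (E 0)^2 + 1"
    using assms by (simp add: Exc_def inter_def power2_eq_square)
qed

lemma cs_int:
  fixes x :: "nat \<Rightarrow> int"
  shows "(\<Sum>i\<in>A. x i)^2 \<le> int (card A) * (\<Sum>i\<in>A. (x i)^2)"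
proof -
  define S where "S = (\<Sum>i\<in>A. x i)"
  define Q where "Q = (\<Sum>i\<in>A. (x i)^2)"
  define n where "n = int (card A)"
  have "0 \<le> (\<Sum>i\<in>A. (n * x i - S)^2)" by (rule sum_nonneg) auto
  also have "(\<Sum>i\<in>A. (n * x i - S)^2) = (\<Sum>i\<in>A. n^2 * (x i)^2 - 2 * n * S * x i + S^2)"
    by (rule sum.cong) (auto simp: power2_eq_square algebra_simps)
  also have "\<dots> = n^2 * Q - 2 * n * S * S + n * S^2"
    by (simp add: sum.distrib sum_subtractf sum_distrib_left[symmetric] Q_def S_def n_def)
  finally have h: "0 \<le> n * (n * Q - S^2)" by (simp add: algebra_simps power2_eq_square)
  show ?thesis
  proof (cases "n = 0")
    case True
    then have "card A = 0" by (simp add: n_def)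
    then have "A = {} \<or> infinite A" by auto
    then show ?thesis by auto
  next
    case False
    then have "n > 0" by (simp add: n_def)
    with h have "0 \<le> n * Q - S^2" by (simp add: zero_le_mult_iff)
    then show ?thesis by (simp add: S_def Q_def n_def)
  qed
qed

lemma exc_d_bounds:
  assumes "E \<in> Exc r" "r \<le> 7"
  shows "0 \<le> E 0 \<and> E 0 \<le> 3"
proof -
  have "(1 - 3 * E 0)^2 \<le> int r * ((E 0)^2 + 1)"
    using cs_int[of E "{1..r}"] exc_sums[OF assms(1)] by simp
  also have "\<dots> \<le> 7 * ((E 0)^2 + 1)"
    using assms(2) by (intro mult_right_mono) auto
  finally have h: "2 * (E 0)^2 - 6 * E 0 - 6 \<le> 0" by (simp add: power2_eq_square algebra_simps)
  show ?thesis
  proof (rule ccontr)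
    assume "\<not> ?thesis"
    then have "E 0 < 0 \<or> E 0 \<ge> 4" by auto
    then show False
    proof
      assume "E 0 < 0"
      then have "1 * (- E 0) \<le> (- E 0) * (- E 0)" by (intro mult_right_mono) auto
      then show False using h \<open>E 0 < 0\<close> by (simp add: power2_eq_square)
    next
      assume a: "E 0 \<ge> 4"
      then have "(E 0)^2 \<ge> 4 * E 0" by (simp add: power2_eq_square mult_right_mono)
      then show False using h a by linarith
    qed
  qed
qed

lemma exc_c_bounds:
  assumes "E \<in> Exc r" "r \<le> 7" "i \<in> {1..r}"
  shows "\<bar>E i\<bar> \<le> 4"
proof -
  have "(E i)^2 \<le> (\<Sum>i=1..r. (E i)^2)"
    using assms(3) by (intro member_le_sum) auto
  also have "\<dots> \<le> 10"
  proof -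
    have "0 \<le> E 0" "E 0 \<le> 3" using exc_d_bounds[OF assms(1,2)] by auto
    then have "(E 0)^2 \<le> 3^2" by (intro power_mono) auto
    then show ?thesis using exc_sums(2)[OF assms(1)] by simp
  qed
  finally have "(E i)^2 \<le> 10" .
  show ?thesis
  proof (rule ccontr)
    assume "\<not> ?thesis"
    then have "\<bar>E i\<bar> \<ge> 5" by auto
    then have "5 * 5 \<le> \<bar>E i\<bar> * \<bar>E i\<bar>" by (intro mult_mono) auto
    then have "\<bar>E i\<bar>^2 \<ge> 25" by (simp add: power2_eq_square)
    then show False using \<open>(E i)^2 \<le> 10\<close> by simp
  qed
qed

lemma finite_Exc: assumes "r \<le> 7" shows "finite (Exc r)"
proof -
  have "Exc r \<subseteq> {f. \<forall>x. (x \<in> {0..r} \<longrightarrow> f x \<in> {-4..4}) \<and> (x \<notin> {0..r} \<longrightarrow> f x = 0)}"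
  proof safe
    fix E x assume E: "E \<in> Exc r" and x: "x \<in> {0..r}"
    show "E x \<in> {-4..4}"
    proof (cases "x = 0")
      case True then show ?thesis using exc_d_bounds[OF E assms] by auto
    next
      case False then show ?thesis using exc_c_bounds[OF E assms, of x] x by auto
    qed
  next
    fix E x assume E: "E \<in> Exc r" and x: "x \<notin> {0..r}"
    then show "E x = 0" by (auto simp: Exc_def in_pic_def)
  qed
  moreover have "finite {f::pic. \<forall>x. (x \<in> {0..r} \<longrightarrow> f x \<in> {-4..4}) \<and> (x \<notin> {0..r} \<longrightarrow> f x = 0)}"
    by (rule finite_set_of_finite_funs) auto
  ultimately show ?thesis by (rule finite_subset)
qed


lemma exc_d0:
  assumes E: "E \<in> Exc r" and d: "E 0 = 0"
  shows "\<exists>j\<in>{1..r}. E = ecls j"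
proof -
  have s1: "(\<Sum>i=1..r. E i) = 1" using exc_sums(1)[OF E] d by simp
  have s2: "(\<Sum>i=1..r. (E i)^2) = 1" using exc_sums(2)[OF E] d by simp
  have "(\<Sum>i=1..r. (E i)^2 - E i) = 0" using s1 s2 by (simp add: sum_subtractf)
  moreover have nn: "\<forall>i. 0 \<le> (E i)^2 - E i"
  proof
    fix i
    show "0 \<le> (E i)^2 - E i"
    proof (cases "E i \<le> 0")
      case True then show ?thesis by (smt (verit) zero_le_power2)
    next
      case False then have "1 * E i \<le> E i * E i" by (intro mult_right_mono) auto
      then show ?thesis by (simp add: power2_eq_square)
    qed
  qed
  ultimately have z: "\<forall>i\<in>{1..r}. (E i)^2 - E i = 0"
    using sum_nonneg_eq_0_iff[of "{1..r}" "\<lambda>i. (E i)^2 - E i"] by auto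
  have h01: "\<forall>i\<in>{1..r}. E i = 0 \<or> E i = 1"
  proof
    fix i assume "i \<in> {1..r}"
    then have "E i * (E i - 1) = 0" using z by (simp add: power2_eq_square algebra_simps)
    then show "E i = 0 \<or> E i = 1" by auto
  qed
  obtain j where j: "j \<in> {1..r}" "E j \<noteq> 0"
  proof (rule ccontr)
    assume "\<not> thesis"
    then have "\<forall>i\<in>{1..r}. E i = 0" using that by blast
    then have "(\<Sum>i=1..r. E i) = 0" by simp
    then show False using s1 by simp
  qed
  then have Ej: "E j = 1" using h01 by auto
  have "(\<Sum>i=1..r. E i) = E j + (\<Sum>i\<in>{1..r}-{j}. E i)"
    using j(1) by (simp add: sum.remove)
  then have "(\<Sum>i\<in>{1..r}-{j}. E i) = 0" using s1 Ej by simp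
  moreover have "\<forall>i\<in>{1..r}-{j}. 0 \<le> E i" using h01 by force
  ultimately have oth: "\<forall>i\<in>{1..r}-{j}. E i = 0"
    using sum_nonneg_eq_0_iff[of "{1..r}-{j}" E] by auto
  have "E = ecls j"
  proof
    fix k
    show "E k = ecls j k"
    proof (cases "k = 0")
      case True then show ?thesis using d j(1) by (auto simp: ecls_def)
    next
      case False
      show ?thesis
      proof (cases "k \<le> r")
        case True
        then show ?thesis using oth Ej False by (auto simp: ecls_def)
      next
        case False
        then show ?thesis using E j(1) by (auto simp: Exc_def in_pic_def ecls_def)
      qed
    qed
  qed
  then show ?thesis using j(1) by blast
qed

lemma exc_class:
  assumes "E \<in> Exc r" "r \<le> 7"
  shows "1 \<le> E 0 \<or> E \<in> ecls ` {1..r}"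
  using exc_d0[OF assms(1)] exc_d_bounds[OF assms] by force

lemma ecls_0: "ecls j 0 = 0" if "j \<ge> 1" using that by (simp add: ecls_def)


lemma poly_sum_singles:
  fixes p :: "'a \<Rightarrow>\<^sub>0 'b::comm_monoid_add"
  shows "p = (\<Sum>\<alpha>\<in>Poly_Mapping.keys p. Poly_Mapping.single \<alpha> (Poly_Mapping.lookup p \<alpha>))"
proof (rule poly_mapping_eqI)
  fix k
  have "Poly_Mapping.lookup (\<Sum>\<alpha>\<in>Poly_Mapping.keys p. Poly_Mapping.single \<alpha> (Poly_Mapping.lookup p \<alpha>)) k
     = (\<Sum>\<alpha>\<in>Poly_Mapping.keys p. (if \<alpha> = k then Poly_Mapping.lookup p \<alpha> else 0))"
    by (simp add: lookup_sum lookup_single when_def)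
  also have "\<dots> = Poly_Mapping.lookup p k"
    by (simp add: in_keys_iff)
  finally show "Poly_Mapping.lookup p k = Poly_Mapping.lookup (\<Sum>\<alpha>\<in>Poly_Mapping.keys p. Poly_Mapping.single \<alpha> (Poly_Mapping.lookup p \<alpha>)) k"
    by simp
qed

lemma lookup_single_mult:
  fixes p :: "('x \<Rightarrow>\<^sub>0 nat) \<Rightarrow>\<^sub>0 'k::comm_semiring_1"
  shows "Poly_Mapping.lookup (Poly_Mapping.single \<gamma> 1 * p) (\<gamma> + \<alpha>) = Poly_Mapping.lookup p \<alpha>"
proof -
  have "Poly_Mapping.single \<gamma> 1 * p = Poly_Mapping.single \<gamma> 1 * (\<Sum>\<beta>\<in>Poly_Mapping.keys p. Poly_Mapping.single \<beta> (Poly_Mapping.lookup p \<beta>))"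
    by (subst poly_sum_singles[of p]) simp
  also have "\<dots> = (\<Sum>\<beta>\<in>Poly_Mapping.keys p. Poly_Mapping.single (\<gamma> + \<beta>) (Poly_Mapping.lookup p \<beta>))"
    by (simp add: sum_distrib_left mult_single)
  finally have e: "Poly_Mapping.single \<gamma> 1 * p = \<dots>" .
  have "Poly_Mapping.lookup (\<Sum>\<beta>\<in>Poly_Mapping.keys p. Poly_Mapping.single (\<gamma> + \<beta>) (Poly_Mapping.lookup p \<beta>)) (\<gamma> + \<alpha>)
     = (\<Sum>\<beta>\<in>Poly_Mapping.keys p. (if \<beta> = \<alpha> then Poly_Mapping.lookup p \<beta> else 0))"
    by (simp add: lookup_sum lookup_single when_def)
  also have "\<dots> = Poly_Mapping.lookup p \<alpha>"
    by (simp add: in_keys_iff)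
  finally show ?thesis using e by simp
qed

definition ES :: "nat \<Rightarrow> pic set" where "ES r = ecls ` {1..r}"

lemma finite_ES: "finite (ES r)" by (simp add: ES_def)

lemma lookup_eprod: "Poly_Mapping.lookup (eprod r) E = (if E \<in> ES r then 1 else 0)"
proof -
  have "Poly_Mapping.lookup (eprod r) E = (\<Sum>i=1..r. (if ecls i = E then 1 else (0::nat)))"
    unfolding eprod_def lookup_sum by (intro sum.cong) (auto simp: lookup_single when_def)
  also have "\<dots> = (if E \<in> ES r then 1 else 0)"
  proof (cases "E \<in> ES r")
    case True
    then obtain j where j: "j \<in> {1..r}" "E = ecls j" by (auto simp: ES_def)
    have "(\<Sum>i=1..r. (if ecls i = E then 1 else 0)) = (\<Sum>i=1..r. (if i = j then 1 else (0::nat)))"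
      using ecls_inj j(2) by (intro sum.cong) auto
    then show ?thesis using True j(1) by simp
  next
    case False
    then have "\<forall>i\<in>{1..r}. ecls i \<noteq> E" by (auto simp: ES_def)
    then show ?thesis using False by simp
  qed
  finally show ?thesis .
qed

lemma monom1_eprod_pow:
  "\<exists>\<gamma>. (monom1 (eprod r) :: ('k::field) cpoly) ^ n = Poly_Mapping.single \<gamma> 1 \<and>
      (\<forall>E. Poly_Mapping.lookup \<gamma> E = (if E \<in> ES r then n else 0))"
proof (induction n)
  case 0
  show ?case by (rule exI[of _ 0]) simp
next
  case (Suc n)
  then obtain \<gamma> where g: "(monom1 (eprod r) :: 'k cpoly) ^ n = Poly_Mapping.single \<gamma> 1"
    "\<forall>E. Poly_Mapping.lookup \<gamma> E = (if E \<in> ES r then n else 0)" by blast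
  have "(monom1 (eprod r) :: 'k cpoly) ^ Suc n = Poly_Mapping.single (eprod r + \<gamma>) 1"
    using g(1) by (simp add: monom1_def mult_single)
  moreover have "\<forall>E. Poly_Mapping.lookup (eprod r + \<gamma>) E = (if E \<in> ES r then Suc n else 0)"
    using g(2) by (simp add: lookup_add lookup_eprod)
  ultimately show ?case by blast
qed

definition Mon :: "nat \<Rightarrow> (pic \<Rightarrow>\<^sub>0 nat) set \<Rightarrow> ('k::field) cpoly set" where
  "Mon r A = {p \<in> kE r. \<forall>\<alpha>\<in>Poly_Mapping.keys p. \<exists>\<beta>\<in>A. \<forall>E. Poly_Mapping.lookup \<beta> E \<le> Poly_Mapping.lookup \<alpha> E}"

lemma kE_single: "Poly_Mapping.keys \<alpha> \<subseteq> Exc r \<Longrightarrow> Poly_Mapping.single \<alpha> c \<in> kE r"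
  by (simp add: kE_def)

lemma Mon_ideal:
  assumes "\<forall>\<alpha>\<in>A. Poly_Mapping.keys \<alpha> \<subseteq> Exc r"
  shows "is_ideal r (Mon r A :: ('k::field) cpoly set)" "monom1 ` A \<subseteq> (Mon r A :: 'k cpoly set)"
proof -
  have add: "p + q \<in> Mon r A" if "p \<in> Mon r A" "q \<in> Mon r A" for p q :: "'k cpoly"
  proof -
    have "Poly_Mapping.keys (p+q) \<subseteq> Poly_Mapping.keys p \<union> Poly_Mapping.keys q" by (rule keys_add)
    then show ?thesis using that unfolding Mon_def kE_def mem_Collect_eq by blast
  qed
  have mul: "p * q \<in> Mon r A" if p: "p \<in> kE r" and q: "q \<in> Mon r A" for p q :: "'k cpoly"
  proof -
    have "\<forall>\<gamma>\<in>Poly_Mapping.keys (p * q). Poly_Mapping.keys \<gamma> \<subseteq> Exc r \<and>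
           (\<exists>\<beta>\<in>A. \<forall>E. Poly_Mapping.lookup \<beta> E \<le> Poly_Mapping.lookup \<gamma> E)"
    proof
      fix \<gamma> assume "\<gamma> \<in> Poly_Mapping.keys (p * q)"
      then obtain a b where ab: "\<gamma> = a + b" "a \<in> Poly_Mapping.keys p" "b \<in> Poly_Mapping.keys q"
        using keys_mult[of p q] by blast
      have "Poly_Mapping.keys a \<subseteq> Exc r" using ab(2) p by (auto simp: kE_def)
      moreover have "Poly_Mapping.keys b \<subseteq> Exc r" using ab(3) q by (auto simp: kE_def Mon_def)
      ultimately have "Poly_Mapping.keys \<gamma> \<subseteq> Exc r"
        using ab(1) keys_add[of a b] by blast
      moreover obtain \<beta> where bb: "\<beta> \<in> A" "\<forall>E. Poly_Mapping.lookup \<beta> E \<le> Poly_Mapping.lookup b E"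
        using q ab(3) by (auto simp: Mon_def)
      have "\<exists>\<beta>\<in>A. \<forall>E. Poly_Mapping.lookup \<beta> E \<le> Poly_Mapping.lookup \<gamma> E"
      proof (intro bexI[of _ \<beta>] allI)
        fix E
        have "Poly_Mapping.lookup \<beta> E \<le> Poly_Mapping.lookup b E" using bb(2) by blast
        then show "Poly_Mapping.lookup \<beta> E \<le> Poly_Mapping.lookup \<gamma> E"
          unfolding ab(1) lookup_add by linarith
      qed (rule bb(1))
      ultimately show "Poly_Mapping.keys \<gamma> \<subseteq> Exc r \<and>
           (\<exists>\<beta>\<in>A. \<forall>E. Poly_Mapping.lookup \<beta> E \<le> Poly_Mapping.lookup \<gamma> E)" by blast
    qed
    then show ?thesis by (auto simp: Mon_def kE_def)
  qed
  show "is_ideal r (Mon r A :: 'k cpoly set)"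
    unfolding is_ideal_def
  proof (intro conjI ballI)
    show "Mon r A \<subseteq> kE r" by (auto simp: Mon_def)
    show "0 \<in> (Mon r A :: 'k cpoly set)" by (simp add: Mon_def kE_def)
  qed (auto intro: add mul)
  show "monom1 ` A \<subseteq> (Mon r A :: 'k cpoly set)"
    using assms by (auto simp: Mon_def monom1_def kE_def)
qed

lemma ideal_sum_mem:
  assumes "is_ideal r I" "\<forall>x\<in>S. f x \<in> I"
  shows "sum f S \<in> I"
  using assms(2)
proof (induction S rule: infinite_finite_induct)
  case (infinite A) then show ?case using assms(1) by (simp add: is_ideal_def)
next
  case empty then show ?case using assms(1) by (simp add: is_ideal_def)
next
  case (insert x F) then show ?case using assms(1) by (simp add: is_ideal_def)
qed

lemma ideal_gen_Mon:
  assumes "\<forall>\<alpha>\<in>A. Poly_Mapping.keys \<alpha> \<subseteq> Exc r"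
  shows "ideal_gen r (monom1 ` A) = (Mon r A :: ('k::field) cpoly set)"
proof
  show "ideal_gen r (monom1 ` A) \<subseteq> (Mon r A :: 'k cpoly set)"
    unfolding ideal_gen_def using Mon_ideal[OF assms] by blast
  show "(Mon r A :: 'k cpoly set) \<subseteq> ideal_gen r (monom1 ` A)"
  proof
    fix p :: "'k cpoly" assume p: "p \<in> Mon r A"
    show "p \<in> ideal_gen r (monom1 ` A)"
      unfolding ideal_gen_def
    proof (rule InterI, safe)
      fix I assume I: "is_ideal r I" "monom1 ` A \<subseteq> (I :: 'k cpoly set)"
      have "\<forall>\<alpha>\<in>Poly_Mapping.keys p. Poly_Mapping.single \<alpha> (Poly_Mapping.lookup p \<alpha>) \<in> I"
      proof
        fix \<alpha> assume a: "\<alpha> \<in> Poly_Mapping.keys p"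
        then obtain \<beta> where b: "\<beta> \<in> A" "\<forall>E. Poly_Mapping.lookup \<beta> E \<le> Poly_Mapping.lookup \<alpha> E"
          using p by (auto simp: Mon_def)
        have ka: "Poly_Mapping.keys \<alpha> \<subseteq> Exc r" using p a by (auto simp: Mon_def kE_def)
        have e: "(\<alpha> - \<beta>) + \<beta> = \<alpha>"
          by (rule poly_mapping_eqI) (use b(2) in \<open>simp add: lookup_add lookup_minus\<close>)
        have "Poly_Mapping.keys (\<alpha> - \<beta>) \<subseteq> Poly_Mapping.keys \<alpha>"
          by (auto simp: in_keys_iff lookup_minus)
        then have k: "Poly_Mapping.single (\<alpha> - \<beta>) (Poly_Mapping.lookup p \<alpha>) \<in> kE r"
          using ka by (intro kE_single) auto
        have "Poly_Mapping.single \<alpha> (Poly_Mapping.lookup p \<alpha>)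
            = Poly_Mapping.single (\<alpha> - \<beta>) (Poly_Mapping.lookup p \<alpha>) * monom1 \<beta>"
          by (simp add: monom1_def mult_single e)
        moreover have "monom1 \<beta> \<in> I" using I(2) b(1) by blast
        ultimately show "Poly_Mapping.single \<alpha> (Poly_Mapping.lookup p \<alpha>) \<in> I"
          using I(1) k by (simp add: is_ideal_def)
      qed
      then have "(\<Sum>\<alpha>\<in>Poly_Mapping.keys p. Poly_Mapping.single \<alpha> (Poly_Mapping.lookup p \<alpha>)) \<in> I"
        by (rule ideal_sum_mem[OF I(1)])
      then show "p \<in> I" using poly_sum_singles[of p] by simp
    qed
  qed
qed


theorem mainTheorem17:
  fixes r m :: nat and M :: "('k::field) cpoly set"
  assumes "4 \<le> r" and "r \<le> 7"
    and "monomial_ideal r M"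
    and "(\<exists>N c. \<forall>a. (\<forall>i\<in>{1..r}. a i \<ge> N) \<longrightarrow> qdim r M (Dcls r m a) = c)
       \<or> (\<exists>N c. \<forall>a. (\<forall>i\<in>{1..r}. a i \<ge> N) \<longrightarrow>
              qdim r (saturation r M (monom1 (eprod r))) (Dcls r m a) = c)"
  shows "\<exists>N. \<forall>a. (\<forall>i\<in>{1..r}. a i \<ge> N) \<longrightarrow>
           qdim r M (Dcls r m a) = qdim r (saturation r M (monom1 (eprod r))) (Dcls r m a)"
proof -
  from assms(3) obtain A where hA: "\<forall>\<alpha>\<in>A. Poly_Mapping.keys \<alpha> \<subseteq> Exc r"
    and MA: "M = ideal_gen r (monom1 ` A)" and idM: "is_ideal r M"
    unfolding monomial_ideal_def by blast
  have MM: "M = Mon r A" using ideal_gen_Mon[OF hA] MA by simp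
  define X where "X = {E \<in> Exc r. 1 \<le> E 0}"
  have finX: "finite X" unfolding X_def using finite_Exc[OF assms(2)] by simp
  define U where "U = {g :: pic \<Rightarrow> nat. \<forall>x. (x \<in> X \<longrightarrow> g x \<in> {0..m}) \<and> (x \<notin> X \<longrightarrow> g x = 0)}"
  have finU: "finite U" unfolding U_def by (rule finite_set_of_finite_funs) (simp_all add: finX)
  define good where "good g \<longleftrightarrow> (\<exists>c::nat. \<exists>\<beta>\<in>A. \<forall>E. Poly_Mapping.lookup \<beta> E \<le> g E + (if E \<in> ES r then c else 0))"
    for g :: "pic \<Rightarrow> nat"
  define cc where "cc g = (SOME c. \<exists>\<beta>\<in>A. \<forall>E. Poly_Mapping.lookup \<beta> E \<le> g E + (if E \<in> ES r then c else 0))"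
    for g :: "pic \<Rightarrow> nat"
  have cc: "\<exists>\<beta>\<in>A. \<forall>E. Poly_Mapping.lookup \<beta> E \<le> g E + (if E \<in> ES r then cc g else 0)" if "good g" for g
    using that unfolding good_def cc_def by (rule someI_ex)
  define s where "s g j = (\<Sum>E\<in>X. int (g E) * E j)" for g :: "pic \<Rightarrow> nat" and j
  define N where "N = (\<Sum>g\<in>U. \<Sum>j\<in>{1..r}. int (cc g) + \<bar>s g j\<bar>)"
  have Nge: "int (cc g) + \<bar>s g j\<bar> \<le> N" if "g \<in> U" "j \<in> {1..r}" for g j
  proof -
    have "int (cc g) + \<bar>s g j\<bar> \<le> (\<Sum>j\<in>{1..r}. int (cc g) + \<bar>s g j\<bar>)"
      using that(2) by (intro member_le_sum) auto
    also have "\<dots> \<le> N" unfolding N_def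
      using that(1) finU by (intro member_le_sum[where f = "\<lambda>g. \<Sum>j\<in>{1..r}. int (cc g) + \<bar>s g j\<bar>"])
        (auto intro: sum_nonneg)
    finally show ?thesis .
  qed
  show ?thesis
  proof (intro exI allI impI)
    fix a :: "nat \<Rightarrow> int" assume a: "\<forall>i\<in>{1..r}. N \<le> a i"
    define D where "D = Dcls r m a"
    have "M \<inter> hcomp r D = saturation r M (monom1 (eprod r)) \<inter> hcomp r D"
    proof
      show "M \<inter> hcomp r D \<subseteq> saturation r M (monom1 (eprod r)) \<inter> hcomp r D"
      proof
        fix p assume p: "p \<in> M \<inter> hcomp r D"
        then have "p \<in> kE r" using idM by (auto simp: is_ideal_def)
        moreover have "monom1 (eprod r) ^ 0 * p \<in> M" using p by simp
        ultimately show "p \<in> saturation r M (monom1 (eprod r)) \<inter> hcomp r D"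
          using p unfolding saturation_def by blast
      qed
      show "saturation r M (monom1 (eprod r)) \<inter> hcomp r D \<subseteq> M \<inter> hcomp r D"
      proof
        fix p :: "'k cpoly" assume p: "p \<in> saturation r M (monom1 (eprod r)) \<inter> hcomp r D"
        then have pk: "p \<in> kE r" and deg: "\<forall>\<alpha>\<in>Poly_Mapping.keys p. mdeg \<alpha> = D"
          by (auto simp: saturation_def hcomp_def)
        from p obtain n where n: "monom1 (eprod r) ^ n * p \<in> M" by (auto simp: saturation_def)
        obtain \<gamma> where \<gamma>: "(monom1 (eprod r) :: 'k cpoly) ^ n = Poly_Mapping.single \<gamma> 1"
          "\<forall>E. Poly_Mapping.lookup \<gamma> E = (if E \<in> ES r then n else 0)"
          using monom1_eprod_pow by blast
        have fp: "Poly_Mapping.single \<gamma> 1 * p \<in> Mon r A" using n \<gamma>(1) MM by simp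
        have "p \<in> Mon r A" unfolding Mon_def mem_Collect_eq
        proof (intro conjI ballI pk)
          fix \<alpha> assume \<alpha>: "\<alpha> \<in> Poly_Mapping.keys p"
          have ka: "Poly_Mapping.keys \<alpha> \<subseteq> Exc r" using pk \<alpha> by (auto simp: kE_def)
          have md: "mdeg \<alpha> = D" using deg \<alpha> by blast
          define g where "g E = (if E \<in> X then Poly_Mapping.lookup \<alpha> E else 0)" for E
          have keysXES: "Poly_Mapping.keys \<alpha> \<subseteq> X \<union> ES r"
            using ka exc_class[OF _ assms(2)] unfolding X_def ES_def by blast
          have ne: "Poly_Mapping.lookup \<alpha> E = g E" if "E \<notin> ES r" for E
          proof (cases "E \<in> X")
            case True then show ?thesis by (simp add: g_def)
          next
            case False
            then have "E \<notin> Poly_Mapping.keys \<alpha>" using keysXES that by blast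
            then show ?thesis using False by (simp add: g_def in_keys_iff)
          qed
          have ES0: "E 0 = 0" if "E \<in> ES r" for E
            using that by (auto simp: ES_def ecls_def)
          have gES: "g E = 0" if "E \<in> ES r" for E
            using ES0[OF that] by (simp add: g_def X_def)
          have gU: "g \<in> U" unfolding U_def
          proof (intro CollectI allI conjI impI)
            fix x assume x: "x \<in> X"
            show "g x \<in> {0..m}"
            proof (cases "x \<in> Poly_Mapping.keys \<alpha>")
              case True
              have "int (Poly_Mapping.lookup \<alpha> x) \<le> int (Poly_Mapping.lookup \<alpha> x) * x 0"
                using x mult_left_mono[of 1 "x 0" "int (Poly_Mapping.lookup \<alpha> x)"] by (simp add: X_def)
              also have "\<dots> \<le> (\<Sum>E\<in>Poly_Mapping.keys \<alpha>. int (Poly_Mapping.lookup \<alpha> E) * E 0)"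
                using True ka exc_d_bounds[OF _ assms(2)] by (intro member_le_sum) auto
              also have "\<dots> = mdeg \<alpha> 0" by (simp add: mdeg_def)
              also have "\<dots> = int m" using md by (simp add: D_def Dcls_def)
              finally show ?thesis using x by (simp add: g_def)
            next
              case False then show ?thesis by (simp add: g_def in_keys_iff)
            qed
          next
            fix x assume "x \<notin> X" then show "g x = 0" by (simp add: g_def)
          qed
          have aj: "int (Poly_Mapping.lookup \<alpha> (ecls j)) = a j - s g j" if j: "j \<in> {1..r}" for j
          proof -
            have "a j = mdeg \<alpha> j" using md j by (simp add: D_def Dcls_def)
            also have "\<dots> = (\<Sum>E\<in>Poly_Mapping.keys \<alpha>. int (Poly_Mapping.lookup \<alpha> E) * E j)"
              by (simp add: mdeg_def)
            also have "\<dots> = (\<Sum>E\<in>X \<union> ES r. int (Poly_Mapping.lookup \<alpha> E) * E j)"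
              using keysXES finX finite_ES by (intro sum.mono_neutral_left) (auto simp: in_keys_iff)
            also have "\<dots> = (\<Sum>E\<in>X. int (Poly_Mapping.lookup \<alpha> E) * E j) + (\<Sum>E\<in>ES r. int (Poly_Mapping.lookup \<alpha> E) * E j)"
            proof (rule sum.union_disjoint)
              show "X \<inter> ES r = {}" using ES0 by (fastforce simp: X_def)
            qed (use finX finite_ES in auto)
            also have "(\<Sum>E\<in>X. int (Poly_Mapping.lookup \<alpha> E) * E j) = s g j"
              unfolding s_def by (intro sum.cong) (auto simp: g_def)
            also have "(\<Sum>E\<in>ES r. int (Poly_Mapping.lookup \<alpha> E) * E j)
                = (\<Sum>i\<in>{1..r}. int (Poly_Mapping.lookup \<alpha> (ecls i)) * ecls i j)"
              unfolding ES_def by (rule sum.reindex_cong[where l = ecls]) (auto intro: inj_onI ecls_inj)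
            also have "\<dots> = (\<Sum>i\<in>{1..r}. (if i = j then int (Poly_Mapping.lookup \<alpha> (ecls j)) else 0))"
              by (intro sum.cong) (auto simp: ecls_def)
            also have "\<dots> = int (Poly_Mapping.lookup \<alpha> (ecls j))" using j by simp
            finally show ?thesis by simp
          qed
          have goodg: "good g"
          proof -
            have "Poly_Mapping.lookup (Poly_Mapping.single \<gamma> 1 * p) (\<gamma> + \<alpha>) \<noteq> 0"
              using \<alpha> by (simp add: lookup_single_mult in_keys_iff)
            then have "\<gamma> + \<alpha> \<in> Poly_Mapping.keys (Poly_Mapping.single \<gamma> 1 * p)" by (simp add: in_keys_iff)
            then obtain \<beta> where \<beta>: "\<beta> \<in> A" "\<forall>E. Poly_Mapping.lookup \<beta> E \<le> Poly_Mapping.lookup (\<gamma> + \<alpha>) E"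
              using fp unfolding Mon_def by blast
            define c where "c = n + (\<Sum>E\<in>ES r. Poly_Mapping.lookup \<alpha> E)"
            have "\<forall>E. Poly_Mapping.lookup \<beta> E \<le> g E + (if E \<in> ES r then c else 0)"
            proof
              fix E
              have b: "Poly_Mapping.lookup \<beta> E \<le> Poly_Mapping.lookup \<gamma> E + Poly_Mapping.lookup \<alpha> E"
                using \<beta>(2) by (simp add: lookup_add)
              show "Poly_Mapping.lookup \<beta> E \<le> g E + (if E \<in> ES r then c else 0)"
              proof (cases "E \<in> ES r")
                case True
                have "Poly_Mapping.lookup \<alpha> E \<le> (\<Sum>E\<in>ES r. Poly_Mapping.lookup \<alpha> E)"
                  using True finite_ES by (intro member_le_sum) auto
                then show ?thesis using True b \<gamma>(2) by (simp add: c_def)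
              next
                case False
                then show ?thesis using b \<gamma>(2) ne[OF False] by simp
              qed
            qed
            then show ?thesis unfolding good_def using \<beta>(1) by blast
          qed
          obtain \<beta>' where \<beta>': "\<beta>' \<in> A" "\<forall>E. Poly_Mapping.lookup \<beta>' E \<le> g E + (if E \<in> ES r then cc g else 0)"
            using cc[OF goodg] by blast
          show "\<exists>\<beta>\<in>A. \<forall>E. Poly_Mapping.lookup \<beta> E \<le> Poly_Mapping.lookup \<alpha> E"
          proof (intro bexI[of _ \<beta>'] allI)
            fix E
            have bE: "Poly_Mapping.lookup \<beta>' E \<le> g E + (if E \<in> ES r then cc g else 0)"
              using \<beta>'(2) by blast
            show "Poly_Mapping.lookup \<beta>' E \<le> Poly_Mapping.lookup \<alpha> E"
            proof (cases "E \<in> ES r")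
              case True
              then obtain j where j: "j \<in> {1..r}" "E = ecls j" by (auto simp: ES_def)
              have "int (cc g) \<le> N - \<bar>s g j\<bar>" using Nge[OF gU j(1)] by simp
              also have "\<dots> \<le> a j - s g j"
              proof -
                have "N \<le> a j" using a j(1) by blast
                moreover have "s g j \<le> \<bar>s g j\<bar>" by simp
                ultimately show ?thesis by linarith
              qed
              also have "\<dots> = int (Poly_Mapping.lookup \<alpha> E)" using aj[OF j(1)] j(2) by simp
              finally have "cc g \<le> Poly_Mapping.lookup \<alpha> E" by simp
              moreover have "Poly_Mapping.lookup \<beta>' E \<le> cc g" using bE gES[OF True] True by simp
              ultimately show ?thesis by linarith
            next
              case False
              then show ?thesis using bE ne[OF False] by simp
            qed
          qed (rule \<beta>'(1))
        qed
        then show "p \<in> M \<inter> hcomp r D" using p MM by simp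
      qed
    qed
    then show "qdim r M (Dcls r m a) = qdim r (saturation r M (monom1 (eprod r))) (Dcls r m a)"
      unfolding qdim_def D_def by simp
  qed
qed

end
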